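(* Let $p,q$ be coprime positive integers with $\frac pq<\frac12$. Then $P_{0,\frac pq}\triangleleft P_{1,\frac pq}$, i.e. $H_2(M_0)>H_2(M_1)$ and $H_2(m_0)>H_2(m_1)$, where $M_r,m_r$ denote the points of absolute maximum and absolute minimum of $P_{r,\frac pq}$.
   Context: $H_2:[0,1]\to[0,1]$ is $H_2(x)=3x$ on $I_0=[0,\frac13]$, $2-3x$ on $I_1=[\frac13,\frac23]$, $3x-2$ on $I_2=[\frac23,1]$. For coprime $p,q$ with $0<\frac pq<\frac12$ and $r\in\{0,1,\dots,q-2p\}$, $\Gamma_{r,\frac pq}$ is the bimodal over-twist pattern whose cyclic permutation $\Pi_{r,\frac pq}$ of $\{1,\dots,q\}$ (action on the points of the cycle labelled $x_1<\dots<x_q$) is: $j\mapsto j+p$ for $1\le j\le r$; $j\mapsto q-j+r+1$ for $r+1\le j\le r+p$; $j\mapsto 2p-j+r+1$ for $r+p+1\le j\le r+2p$; $j\mapsto j-p$ for $r+2p+1\le j\le q$. $P_{r,\frac pq}$ denotes the cycle of $H_2$ exhibiting $\Gamma_{r,\frac pq}$ singled out by the location of its extremal points as follows (the paper asserts it is unique): for $r=0$ and $r=q-2p$ its points $M_r,m_r$ lie in $I_1$, and for $1\le r\le q-2p-1$, $M_r\in I_1$ and $m_r\in I_2$. Here the point of absolute maximum $M_r$ (resp. absolute minimum $m_r$) of a cycle $P$ is the point of $P$ whose image under $H_2$ is the largest (resp. smallest) point of $P$. $P_{r_2,\frac pq}\triangleleft P_{r_1,\frac pq}$ means $H_2(M_{r_2})>H_2(M_{r_1})$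 and $H_2(m_{r_2})>H_2(m_{r_1})$. *)

theory Defs
  imports Complex_Main
begin

definition H2 :: "real \<Rightarrow> real" where
  "H2 x = (if x \<le> 1/3 then 3*x else if x \<le> 2/3 then 2 - 3*x else 3*x - 2)"

definition I1 :: "real set" where "I1 = {1/3..2/3}"
definition I2 :: "real set" where "I2 = {2/3..1}"

definition Pi_ot :: "nat \<Rightarrow> nat \<Rightarrow> nat \<Rightarrow> nat \<Rightarrow> nat" where
  "Pi_ot r p q j =
     (if j \<le> r then j + p
      else if j \<le> r + p then q + r + 1 - j
      else if j \<le> r + 2*p then 2*p + r + 1 - j
      else j - p)"

definition exhibits_ot :: "nat \<Rightarrow> nat \<Rightarrow> nat \<Rightarrow> (nat \<Rightarrow> real) \<Rightarrow> bool" where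
  "exhibits_ot r p q x \<longleftrightarrow>
     (\<forall>i\<in>{1..q}. \<forall>j\<in>{1..q}. i < j \<longrightarrow> x i < x j) \<and>
     (\<forall>j\<in>{1..q}. x j \<in> {0..1} \<and> H2 (x j) = x (Pi_ot r p q j))"

definition abs_max_pt :: "real set \<Rightarrow> real" where
  "abs_max_pt P = (THE y. y \<in> P \<and> H2 y = Max P)"
definition abs_min_pt :: "real set \<Rightarrow> real" where
  "abs_min_pt P = (THE y. y \<in> P \<and> H2 y = Min P)"

definition is_P_ot :: "nat \<Rightarrow> nat \<Rightarrow> nat \<Rightarrow> (nat \<Rightarrow> real) \<Rightarrow> bool" where
  "is_P_ot r p q x \<longleftrightarrow> exhibits_ot r p q x \<and>
     (let P = x ` {1..q} in
       abs_max_pt P \<in> I1 \<and>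
       (if r = 0 \<or> r = q - 2*p then abs_min_pt P \<in> I1 else abs_min_pt P \<in> I2))"

end

theory Submission
  imports Defs "HOL-Number_Theory.Cong"
begin


lemma orbit_lemma:
  fixes p q :: nat
  assumes p0: "0<p" and cop: "coprime p q" and pq: "2*p<q" and P1: "P 1"
    and step: "\<forall>i\<in>{1..q}. P i \<longrightarrow> P (Pi_ot 0 p q i)"
  shows "P (p+1)"
proof -
  define T where "T i = (if i \<le> p then p+1-i else i)" for i::nat
  have Tinv: "T (T i) = i" if "i \<in> {1..q}" for i using that by (auto simp: T_def)
  have Trng: "T i \<in> {1..q}" if "i \<in> {1..q}" for i using that pq by (auto simp: T_def)
  have Pirng: "Pi_ot 0 p q i \<in> {1..q}" if "i \<in> {1..q}" for i
    using that pq by (auto simp: Pi_ot_def)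
  have conj: "T (Pi_ot 0 p q (T u)) = (if u > p then u - p else u + q - p)" if "u \<in> {1..q}" for u
    using that pq by (auto simp: T_def Pi_ot_def)
  define Q where "Q t = P (T (nat (t mod int q) + 1))" for t::int
  have qpos: "int q > 0" using pq by simp
  have Qstep: "Q (t - int p)" if "Q t" for t
  proof -
    define u where "u = nat (t mod int q) + 1"
    have "nat (t mod int q) < q" by (metis nat_less_iff pos_mod_bound pos_mod_sign qpos)
    hence u: "u \<in> {1..q}" by (auto simp: u_def)
    have m0: "0 \<le> t mod int q" using qpos by simp
    have iu: "int u = t mod int q + 1" using m0 by (simp add: u_def)
    have "P (T u)" using that by (simp add: Q_def u_def)
    hence "P (Pi_ot 0 p q (T u))" using step Trng[OF u] by blast
    moreover have "T (T (Pi_ot 0 p q (T u))) = Pi_ot 0 p q (T u)"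
      using Tinv Pirng Trng u by blast
    ultimately have "P (T (T (Pi_ot 0 p q (T u))))" by simp
    hence *: "P (T (if u > p then u - p else u + q - p))" using conj[OF u] by simp
    have "(if u > p then u - p else u + q - p) = nat ((t - int p) mod int q) + 1"
    proof (cases "u > p")
      case True
      hence "t mod int q \<ge> int p" using iu by linarith
      have "(t - int p) mod int q = t mod int q - int p"
      proof -
        have "(t - int p) mod int q = (t mod int q - int p) mod int q"
          by (simp add: mod_simps)
        also have "\<dots> = t mod int q - int p"
          using \<open>t mod int q \<ge> int p\<close> qpos pos_mod_bound[of "int q" t] by (intro mod_pos_pos_trivial) linarith+
        finally show ?thesis .
      qed
      then show ?thesis using True \<open>t mod int q \<ge> int p\<close> by (simp add: u_def nat_diff_distrib)
    next
      case False
      hence lt: "t mod int q < int p" using iu by linarith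
      have "(t - int p) mod int q = t mod int q - int p + int q"
      proof -
        have "(t - int p) mod int q = (t mod int q - int p + int q) mod int q"
          by (simp add: mod_simps)
        also have "\<dots> = t mod int q - int p + int q"
          using lt qpos pq m0 by (intro mod_pos_pos_trivial) linarith+
        finally show ?thesis .
      qed
      hence "int (u + q - p) = int (nat ((t - int p) mod int q) + 1)"
        using iu m0 lt pq by (simp add: of_nat_diff)
      then show ?thesis using False by (simp only: of_nat_eq_iff if_False) 
    qed
    then show ?thesis using * by (simp add: Q_def)
  qed
  have Qn: "Q (t - int n * int p)" if "Q t" for t n
  proof (induction n)
    case 0 then show ?case using that by simp
  next
    case (Suc n)
    from Qstep[OF Suc] show ?case by (simp add: algebra_simps)
  qed
  have Q0: "Q (int p - 1)"
    using pq p0 P1 by (simp add: Q_def T_def nat_diff_distrib)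
  obtain x where x: "[p * x = Suc 0] (mod q)" using cong_solve_coprime_nat[OF cop] by blast
  have q2: "1 < q" using pq p0 by simp
  hence "(p * x) mod q = 1" using x by (simp add: cong_def)
  hence "int ((p * x) mod q) = 1" by simp
  hence px: "(int p * int x) mod int q = 1" by (simp add: zmod_int)
  define n where "n = x * (q - 1)"
  have "(int p - 1 - int n * int p) mod int q = int p"
  proof -
    have eq: "int n * int p = (int p * int x) * (int q - 1)" using pq by (simp add: n_def of_nat_diff)
    have "(int p - 1 - ((int p * int x) mod int q) * (int q - 1)) mod int q
        = (int p - 1 - (((int p * int x) mod int q) * (int q - 1)) mod int q) mod int q"
      by (simp only: mod_diff_right_eq)
    also have "\<dots> = (int p - 1 - ((int p * int x) * (int q - 1)) mod int q) mod int q"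
      by (simp only: mod_mult_left_eq)
    also have "\<dots> = (int p - 1 - int n * int p) mod int q"
      by (simp only: mod_diff_right_eq eq)
    finally have "(int p - 1 - int n * int p) mod int q = (int p - 1 - ((int p * int x) mod int q) * (int q - 1)) mod int q" by simp
    also have "\<dots> = (int p - int q) mod int q" using px by (simp add: algebra_simps)
    also have "\<dots> = int p" using pq by (simp add: mod_pos_pos_trivial mod_simps)
    finally show ?thesis .
  qed
  with Qn[OF Q0, of n] have "P (T (p+1))" by (simp add: Q_def nat_add_distrib)
  thus ?thesis by (simp add: T_def)
qed


lemma H2_I0: "x \<le> 1/3 \<Longrightarrow> H2 x = 3*x" by (simp add: H2_def)
lemma H2_I1: "1/3 \<le> x \<Longrightarrow> x \<le> 2/3 \<Longrightarrow> H2 x = 2 - 3*x" by (simp add: H2_def)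
lemma H2_I2: "2/3 \<le> x \<Longrightarrow> H2 x = 3*x - 2" by (auto simp: H2_def)

lemma Pi_rng: "r + 2*p \<le> q \<Longrightarrow> j \<in> {1..q} \<Longrightarrow> Pi_ot r p q j \<in> {1..q}"
  by (auto simp: Pi_ot_def)

lemma mono_inj:
  fixes x :: "nat \<Rightarrow> real" and q i k :: nat
  assumes mono: "\<forall>i\<in>{1..q}. \<forall>j\<in>{1..q}. i < j \<longrightarrow> x i < (x j::real)"
    and "i \<in> {1..q}" "k \<in> {1..q}" "x i = x k"
  shows "i = k"
proof (rule ccontr)
  assume "i \<noteq> k"
  hence "i < k \<or> k < i" by arith
  thus False using mono[rule_format, of i k] mono[rule_format, of k i] assms(2-4) by auto
qed

lemma Max_img:
  fixes x :: "nat \<Rightarrow> real" and q :: nat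
  assumes mono: "\<forall>i\<in>{1..q}. \<forall>j\<in>{1..q}. i < j \<longrightarrow> x i < (x j::real)" and q: "1 \<le> q"
  shows "Max (x ` {1..q}) = x q" "Min (x ` {1..q}) = x 1"
proof -
  have le: "x i \<le> x j" if "i \<in> {1..q}" "j \<in> {1..q}" "i \<le> j" for i j
    using mono[rule_format, of i j] that by (cases "i = j") auto
  show "Max (x ` {1..q}) = x q"
    by (rule Max_eqI) (use le q in auto)
  show "Min (x ` {1..q}) = x 1"
    by (rule Min_eqI) (use le q in auto)
qed

lemma absmax:
  fixes x :: "nat \<Rightarrow> real" and q :: nat
  assumes mono: "\<forall>i\<in>{1..q}. \<forall>j\<in>{1..q}. i < j \<longrightarrow> x i < (x j::real)" and q: "1 \<le> q"
    and Hx: "\<forall>j\<in>{1..q}. H2 (x j) = x (\<pi> j)" and rng: "\<forall>j\<in>{1..q}. \<pi> j \<in> {1..q}"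
    and j0: "j0 \<in> {1..q}" "\<pi> j0 = q" and uq: "\<forall>j\<in>{1..q}. \<pi> j = q \<longrightarrow> j = j0"
  shows "abs_max_pt (x ` {1..q}) = x j0"
  unfolding abs_max_pt_def Max_img[OF mono q]
proof (rule the_equality)
  show "x j0 \<in> x ` {1..q} \<and> H2 (x j0) = x q" using j0 Hx by auto
  fix y assume "y \<in> x ` {1..q} \<and> H2 y = x q"
  then obtain j where j: "j \<in> {1..q}" "y = x j" "x (\<pi> j) = x q" using Hx by auto
  then have "\<pi> j = q" using mono_inj[OF mono, of "\<pi> j" q] rng q by auto
  then show "y = x j0" using uq j by auto
qed

lemma absmin:
  fixes x :: "nat \<Rightarrow> real" and q :: nat
  assumes mono: "\<forall>i\<in>{1..q}. \<forall>j\<in>{1..q}. i < j \<longrightarrow> x i < (x j::real)" and q: "1 \<le> q"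
    and Hx: "\<forall>j\<in>{1..q}. H2 (x j) = x (\<pi> j)" and rng: "\<forall>j\<in>{1..q}. \<pi> j \<in> {1..q}"
    and j0: "j0 \<in> {1..q}" "\<pi> j0 = 1" and uq: "\<forall>j\<in>{1..q}. \<pi> j = 1 \<longrightarrow> j = j0"
  shows "abs_min_pt (x ` {1..q}) = x j0"
  unfolding abs_min_pt_def Max_img[OF mono q]
proof (rule the_equality)
  show "x j0 \<in> x ` {1..q} \<and> H2 (x j0) = x 1" using j0 Hx by auto
  fix y assume "y \<in> x ` {1..q} \<and> H2 y = x 1"
  then obtain j where j: "j \<in> {1..q}" "y = x j" "x (\<pi> j) = x 1" using Hx by auto
  then have "\<pi> j = 1" using mono_inj[OF mono, of "\<pi> j" 1] rng q by auto
  then show "y = x j0" using uq j by auto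
qed

theorem mainTheorem13:
  fixes p q :: nat and x0 x1 :: "nat \<Rightarrow> real"
  assumes "0 < p" "coprime p q" "2 * p < q"
    and "is_P_ot 0 p q x0" and "is_P_ot 1 p q x1"
  shows "H2 (abs_max_pt (x0 ` {1..q})) > H2 (abs_max_pt (x1 ` {1..q})) \<and>
         H2 (abs_min_pt (x0 ` {1..q})) > H2 (abs_min_pt (x1 ` {1..q}))"
proof -
  note p0 = assms(1) and cop = assms(2) and pq = assms(3)
  define a where "a = x0"
  define b where "b = x1"
  have q1: "1 \<le> q" using pq by simp
  have ex0: "exhibits_ot 0 p q a" and ex1: "exhibits_ot 1 p q b"
    using assms(4,5) by (auto simp: is_P_ot_def a_def b_def)
  have amono: "\<forall>i\<in>{1..q}. \<forall>j\<in>{1..q}. i < j \<longrightarrow> a i < a j"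
    and aH: "\<forall>j\<in>{1..q}. H2 (a j) = a (Pi_ot 0 p q j)"
    and a01: "\<forall>j\<in>{1..q}. a j \<in> {0..1}"
    using ex0 by (auto simp: exhibits_ot_def)
  have bmono: "\<forall>i\<in>{1..q}. \<forall>j\<in>{1..q}. i < j \<longrightarrow> b i < b j"
    and bH: "\<forall>j\<in>{1..q}. H2 (b j) = b (Pi_ot 1 p q j)"
    and b01: "\<forall>j\<in>{1..q}. b j \<in> {0..1}"
    using ex1 by (auto simp: exhibits_ot_def)
  have arng: "\<forall>j\<in>{1..q}. Pi_ot 0 p q j \<in> {1..q}" using pq by (intro ballI Pi_rng) auto
  have brng: "\<forall>j\<in>{1..q}. Pi_ot 1 p q j \<in> {1..q}" using pq by (intro ballI Pi_rng) auto
  have amax: "abs_max_pt (a ` {1..q}) = a 1"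
    by (rule absmax[OF amono q1 aH arng]) (use pq p0 in \<open>auto simp: Pi_ot_def\<close>)
  have amin: "abs_min_pt (a ` {1..q}) = a (2*p)"
    by (rule absmin[OF amono q1 aH arng]) (use pq p0 in \<open>auto simp: Pi_ot_def\<close>)
  have bmax: "abs_max_pt (b ` {1..q}) = b 2"
    by (rule absmax[OF bmono q1 bH brng]) (use pq p0 in \<open>auto simp: Pi_ot_def\<close>)
  have bmin: "abs_min_pt (b ` {1..q}) = b (2*p+1)"
    by (rule absmin[OF bmono q1 bH brng]) (use pq p0 in \<open>auto simp: Pi_ot_def\<close>)
  have a1I1: "a 1 \<in> I1" and a2pI1: "a (2*p) \<in> I1"
    using assms(4) amax amin by (auto simp: is_P_ot_def a_def Let_def)
  have b2I1: "b 2 \<in> I1" using assms(5) bmax by (auto simp: is_P_ot_def b_def Let_def)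
  have bminloc: "if q = 2*p+1 then b (2*p+1) \<in> I1 else b (2*p+1) \<in> I2"
  proof -
    have "Suc 0 = q - 2*p \<longleftrightarrow> q = 2*p+1" using pq by arith
    thus ?thesis using assms(5) bmin unfolding is_P_ot_def b_def Let_def by (auto split: if_splits)
  qed

  have amono': "a i < a j" if "1 \<le> i" "i < j" "j \<le> q" for i j using amono that by auto
  have bmono': "b i < b j" if "1 \<le> i" "i < j" "j \<le> q" for i j using bmono that by auto
  have aH': "H2 (a j) = a (Pi_ot 0 p q j)" if "1 \<le> j" "j \<le> q" for j using aH that by auto
  have bH': "H2 (b j) = b (Pi_ot 1 p q j)" if "1 \<le> j" "j \<le> q" for j using bH that by auto
  have a1I: "1/3 \<le> a 1" "a 1 \<le> 2/3" using a1I1 by (auto simp: I1_def)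
  have a2pI: "1/3 \<le> a (2*p)" "a (2*p) \<le> 2/3" using a2pI1 by (auto simp: I1_def)
  have b2I: "1/3 \<le> b 2" "b 2 \<le> 2/3" using b2I1 by (auto simp: I1_def)
  have ale: "a i \<le> a j" if "i \<in> {1..q}" "j \<in> {1..q}" "i \<le> j" for i j
    using amono'[of i j] that by (cases "i = j") auto
  have ble: "b i \<le> b j" if "i \<in> {1..q}" "j \<in> {1..q}" "i \<le> j" for i j
    using bmono'[of i j] that by (cases "i = j") auto
  have aI1: "1/3 \<le> a j \<and> a j \<le> 2/3" if "1 \<le> j" "j \<le> 2*p" for j
    using ale[of 1 j] ale[of j "2*p"] that pq a1I a2pI by auto
  have aI2: "2/3 \<le> a j" if "2*p < j" "j \<le> q" for j
  proof (rule ccontr)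
    assume "\<not> 2/3 \<le> a j"
    have lt: "a (2*p) < a j" using amono'[of "2*p" j] that p0 by auto
    have "H2 (a j) = 2 - 3 * a j" using lt a2pI \<open>\<not> 2/3 \<le> a j\<close> by (intro H2_I1) auto
    moreover have "H2 (a j) = a (j - p)" using aH' that by (auto simp: Pi_ot_def)
    moreover have "H2 (a (2*p)) = a 1" using aH' pq p0 by (auto simp: Pi_ot_def)
    moreover have "H2 (a (2*p)) = 2 - 3 * a (2*p)" using a2pI by (intro H2_I1) auto
    moreover have "a 1 \<le> a (j - p)" using ale[of 1 "j-p"] that p0 by auto
    ultimately show False using lt by linarith
  qed
  have b1: "b 1 < 1/3"
  proof (rule ccontr)
    assume "\<not> b 1 < 1/3"
    have lt: "b 1 < b 2" using bmono'[of 1 2] pq p0 by auto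
    have "H2 (b 1) = 2 - 3 * b 1" using lt b2I \<open>\<not> b 1 < 1/3\<close> by (intro H2_I1) auto
    moreover have "H2 (b 1) = b (1 + p)" using bH' pq by (auto simp: Pi_ot_def)
    moreover have "H2 (b 2) = b q" using bH' pq p0 by (auto simp: Pi_ot_def)
    moreover have "H2 (b 2) = 2 - 3 * b 2" using b2I by (intro H2_I1) auto
    moreover have "b (1+p) \<le> b q" using ble[of "1+p" q] pq by auto
    ultimately show False using lt by linarith
  qed
  have bI1: "1/3 \<le> b j \<and> b j \<le> 2/3" if "2 \<le> j" "j \<le> 2*p" for j
  proof -
    have "1/3 \<le> b j" using ble[of 2 j] that pq b2I by auto
    moreover have "b j \<le> 2/3"
    proof (cases "q = 2*p+1")
      case True
      then show ?thesis using bminloc ble[of j "2*p+1"] that by (auto simp: I1_def)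
    next
      case False
      hence m: "2/3 \<le> b (2*p+1)" using bminloc by (auto simp: I2_def)
      show ?thesis
      proof (rule ccontr)
        assume "\<not> b j \<le> 2/3"
        hence c1: "2/3 \<le> b (2*p)" using ble[of j "2*p"] that pq by auto
        have lt: "b (2*p) < b (2*p+1)" using bmono'[of "2*p" "2*p+1"] pq p0 by auto
        have "H2 (b (2*p)) = 3 * b (2*p) - 2" using c1 by (intro H2_I2)
        moreover have "H2 (b (2*p+1)) = 3 * b (2*p+1) - 2" using m by (intro H2_I2)
        moreover have "H2 (b (2*p+1)) = b 1" using bH' pq by (auto simp: Pi_ot_def)
        moreover have "H2 (b (2*p)) = b (Pi_ot 1 p q (2*p))" using bH' pq p0 by auto
        moreover have "Pi_ot 1 p q (2*p) \<in> {1..q}" "Pi_ot 1 p q (2*p) \<noteq> 1"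
          using brng pq p0 by (auto simp: Pi_ot_def)
        moreover have "b 1 < b (Pi_ot 1 p q (2*p))"
          using calculation(5,6) bmono'[of 1 "Pi_ot 1 p q (2*p)"] pq by auto
        ultimately show False using lt by linarith
      qed
    qed
    ultimately show ?thesis by blast
  qed
  have bI2: "2/3 \<le> b j" if "q \<noteq> 2*p+1" "2*p+1 \<le> j" "j \<le> q" for j
    using bminloc that ble[of "2*p+1" j] by (auto simp: I2_def)
  have aqb: "b q < a q" if "q = 2*p+1"
  proof -
    have "2/3 \<le> a q" using aI2 pq by auto
    moreover have "a q \<noteq> 2/3"
    proof
      assume "a q = 2/3"
      hence "H2 (a q) = 0" by (simp add: H2_def)
      moreover have "H2 (a q) = a (q - p)" using aH' pq by (auto simp: Pi_ot_def)
      moreover have "1/3 \<le> a (q - p)"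
      proof -
        have "1 \<le> q - p" "q - p \<le> q" using pq by arith+
        thus ?thesis using ale[of 1 "q-p"] a1I q1 by auto
      qed
      ultimately show False by simp
    qed
    moreover have "b q \<le> 2/3" using bminloc that by (auto simp: I1_def)
    ultimately show ?thesis by linarith
  qed
  define e where "e i = (if i \<le> p then b (i+1) - a i else if i = p+1 then a (p+1) - b 1 else a i - b i)" for i
  have ep1: "e (p+1) > 0" using b1 aI1[of "p+1"] p0 by (auto simp: e_def)
  have estep: "\<forall>i\<in>{1..q}. e i \<le> 0 \<longrightarrow> e (Pi_ot 0 p q i) \<le> 0"
  proof (intro ballI impI)
    fix i assume i: "i \<in> {1..q}" and ei: "e i \<le> 0"
    have i1: "1 \<le> i" "i \<le> q" using i by auto
    have haI: "H2 (a i) = a (Pi_ot 0 p q i)" using aH'[OF i1] .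
    have hbI: "H2 (b i) = b (Pi_ot 1 p q i)" using bH'[OF i1] .
    consider "i \<le> p" | "i = p+1" | "p+1 < i" "i \<le> 2*p" | "2*p < i" "q = 2*p+1" | "2*p < i" "q \<noteq> 2*p+1"
      by linarith
    then show "e (Pi_ot 0 p q i) \<le> 0"
    proof cases
      case 1
      have pi: "Pi_ot 0 p q i = q+1-i" using 1 i1 by (auto simp: Pi_ot_def)
      have "\<not> (q+1-i \<le> p)" "q+1-i \<noteq> p+1" using 1 pq by arith+
      hence e2: "e (q+1-i) = a (q+1-i) - b (q+1-i)" by (simp add: e_def)
      have aiI: "1/3 \<le> a i" "a i \<le> 2/3" using aI1[of i] 1 i1 pq by auto
      have "a (q+1-i) = 2 - 3 * a i" using haI pi H2_I1[OF aiI] by simp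
      moreover have "b (q+1-i) = 2 - 3 * b (i+1)"
      proof -
        have "H2 (b (i+1)) = b (Pi_ot 1 p q (i+1))" using bH'[of "i+1"] i1 1 pq by auto
        moreover have "Pi_ot 1 p q (i+1) = q+1-i" using 1 i1 by (auto simp: Pi_ot_def)
        moreover have biI: "1/3 \<le> b (i+1)" "b (i+1) \<le> 2/3" using bI1[of "i+1"] 1 i1 p0 by auto
        moreover have "H2 (b (i+1)) = 2 - 3 * b (i+1)" using H2_I1[OF biI] .
        ultimately show ?thesis by simp
      qed
      moreover have "e i = b (i+1) - a i" using 1 by (simp add: e_def)
      ultimately show ?thesis using ei pi e2 by simp
    next
      case 2
      then show ?thesis using ei ep1 by simp
    next
      case 3
      have pi: "Pi_ot 0 p q i = 2*p+1-i" using 3 by (simp add: Pi_ot_def)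
      have "2*p+1-i \<le> p" "2*p+1-i + 1 = 2*p+2-i" using 3 by arith+
      hence e2: "e (2*p+1-i) = b (2*p+2-i) - a (2*p+1-i)" by (simp add: e_def)
      have aiI: "1/3 \<le> a i" "a i \<le> 2/3" using aI1[of i] 3 by auto
      have "a (2*p+1-i) = 2 - 3 * a i" using haI pi H2_I1[OF aiI] by simp
      moreover have "b (2*p+2-i) = 2 - 3 * b i"
      proof -
        have "Pi_ot 1 p q i = 2*p+2-i" using 3 by (auto simp: Pi_ot_def)
        moreover have biI: "1/3 \<le> b i" "b i \<le> 2/3" using bI1[of i] 3 by auto
        moreover have "H2 (b i) = 2 - 3 * b i" using H2_I1[OF biI] .
        ultimately show ?thesis using hbI by simp
      qed
      moreover have "e i = a i - b i" using 3 by (simp add: e_def)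
      ultimately show ?thesis using ei pi e2 by simp
    next
      case 4
      hence "i = q" using i1 by auto
      then show ?thesis using ei aqb 4 p0 by (simp add: e_def)
    next
      case 5
      have ai: "H2 (a i) = 3 * a i - 2" using aI2[of i] 5 i1 H2_I2 by auto
      have bi: "H2 (b i) = 3 * b i - 2" using bI2[of i] 5 i1 H2_I2 by auto
      have ei': "e i = a i - b i" using 5 p0 by (simp add: e_def)
      show ?thesis
      proof (cases "i = 2*p+1")
        case True
        have "Pi_ot 0 p q i = p+1" "Pi_ot 1 p q i = 1" using True by (auto simp: Pi_ot_def)
        then show ?thesis using haI hbI ai bi ei ei' by (simp add: e_def)
      next
        case False
        have "Pi_ot 0 p q i = i - p" "Pi_ot 1 p q i = i - p" using False 5 by (auto simp: Pi_ot_def)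
        moreover have "\<not> (i - p \<le> p)" "i - p \<noteq> p+1" using False 5 by arith+
        moreover have "e (i - p) = a (i-p) - b (i-p)" using calculation(3,4) by (simp add: e_def)
        ultimately show ?thesis using haI hbI ai bi ei ei' by simp
      qed
    qed
  qed
  have e1: "e 1 > 0"
  proof (rule ccontr)
    assume "\<not> e 1 > 0"
    hence "e (p+1) \<le> 0"
      using orbit_lemma[OF p0 cop pq, of "\<lambda>i. e i \<le> 0"] estep by simp
    thus False using ep1 by simp
  qed
  hence ab: "a 1 < b 2" using p0 by (simp add: e_def numeral_2_eq_2)
  have "H2 (a 1) = 2 - 3 * a 1" "H2 (b 2) = 2 - 3 * b 2" using a1I b2I H2_I1 by auto
  moreover have "H2 (a (2*p)) = a 1" using aH' pq p0 by (auto simp: Pi_ot_def)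
  moreover have "H2 (b (2*p+1)) = b 1" using bH' pq by (auto simp: Pi_ot_def)
  ultimately show ?thesis using amax amin bmax bmin ab a1I b1
    by (simp add: a_def b_def)
qed
end
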